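(* In the setting below with integral arrivals ($T=m$, $q_{tj}=1/m$) and running Algorithm RAND-ORDER($\alpha$) with $\alpha\ge1$, for every customer type $j$, every assortment $S\in\mathcal{S}$ and every item $i\in S$: conditional on at least one customer of type $j$ arriving, the probability that item $i$ has already been shown to customer $t_j$ (i.e., was contained in an assortment offered to her) before the algorithm reaches $S$ in the ordering $\pi$ used for customer $t_j$ is at most $\frac{1}{2\alpha}$. Here $t_j$ denotes the first customer of type $j$ to arrive.
   Context: Multi-stage multi-customer assortment problem without repeated offerings. There are $n$ items, each with one unit of inventory, $m$ customer types and $T$ time-steps; in time-step $t$, independently, a customer of type $j$ arrives with probability $q_{tj}\ge0$ ($\sum_jq_{tj}\le1$). $\mathcal{S}$ is a downward-closed family of subsets of $\{1,\dots,n\}$. For each type $j$, $S\in\mathcal{S}$, $i\in S$, $p_j(i,S)\ge0$ is the probability that a type-$j$ customer offered $S$ purchases $i$, with $\sum_{i\in S}p_j(i,S)\le1$; substitutability: $p_j(i,S)\ge p_j(i,S\cup\{i'\})$ for $i'\ne i$. Type $j$ has patience $\ell_j\in\mathbb{Z}_{>0}$: an arriving type-$j$ customer is shown a sequence of at most $\ell_j$ pairwise disjoint assortments from $\mathcal{S}$ of currently available items; at each stage her purchase decision follows the choice probabilities independently of everything else; she leaves upon a purchase or when the sequence ends. MCDLP-NR is the LP: maximize $\sum_{t=1}^T\sum_{j=1}^mq_{tj}\sum_{S\in\mathcal{S}}x_j(S)\sum_{i\in S}r_{ij}p_j(i,S)$ subject to $\sum_{t}\sum_{j}q_{tj}\sum_{S\ni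 i}x_j(S)p_j(i,S)\le1$ for all $i$; $\sum_{S}x_j(S)\sum_{i\in S}p_j(i,S)\le1$ for all $j$; $\sum_{S}x_j(S)\le\ell_j$ for all $j$; $\sum_{S\ni i}x_j(S)\le1$ for all $i,j$; $x\ge0$ (with $r_{ij}\ge 0$ revenues). Algorithm RAND-ORDER($\alpha$), for a parameter $\alpha\ge1$: solve MCDLP-NR for an optimal $x^*$. When a customer of type $j$ arrives at time $t$: if some earlier customer had type $j$, offer her nothing. Otherwise draw a uniformly random ordering $\pi$ of $\mathcal{S}$ and go through the assortments $S$ in the order $\pi$; for each $S$, independently with probability $x^*_j(S)/\alpha$, offer (as one stage) the assortment $S$ with all sold-out items and all items previously shown to this customer removed; stop as soon as the customer purchases an item or $\ell_j$ assortments have been offered. *)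

theory Defs
  imports "HOL-Probability.Probability" "HOL-Combinatorics.Multiset_Permutations"
begin

(* Items have type 'a (finite), customer types have type 'b (finite, m = CARD('b)).
   x :: 'b => 'a set => real  is an LP solution x_j(S);  p j i S = p_j(i,S);  l j = patience. *)

definition mcdlp_feasible ::
  "nat \<Rightarrow> (nat \<Rightarrow> 'b::finite \<Rightarrow> real) \<Rightarrow> ('b \<Rightarrow> 'a::finite \<Rightarrow> 'a set \<Rightarrow> real)
   \<Rightarrow> ('b \<Rightarrow> nat) \<Rightarrow> 'a set set \<Rightarrow> ('b \<Rightarrow> 'a set \<Rightarrow> real) \<Rightarrow> bool" where
  "mcdlp_feasible T q p l SS x \<longleftrightarrow>
     (\<forall>i. (\<Sum>t\<in>{1..T}. \<Sum>j\<in>UNIV. q t j * (\<Sum>S\<in>{S\<in>SS. i \<in> S}. x j S * p j i S)) \<le> 1) \<and>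
     (\<forall>j. (\<Sum>S\<in>SS. x j S * (\<Sum>i\<in>S. p j i S)) \<le> 1) \<and>
     (\<forall>j. (\<Sum>S\<in>SS. x j S) \<le> real (l j)) \<and>
     (\<forall>i j. (\<Sum>S\<in>{S\<in>SS. i \<in> S}. x j S) \<le> 1) \<and>
     (\<forall>j. \<forall>S\<in>SS. x j S \<ge> 0)"

definition mcdlp_objective ::
  "nat \<Rightarrow> (nat \<Rightarrow> 'b::finite \<Rightarrow> real) \<Rightarrow> ('b \<Rightarrow> 'a::finite \<Rightarrow> 'a set \<Rightarrow> real)
   \<Rightarrow> ('a \<Rightarrow> 'b \<Rightarrow> real) \<Rightarrow> 'a set set \<Rightarrow> ('b \<Rightarrow> 'a set \<Rightarrow> real) \<Rightarrow> real" where
  "mcdlp_objective T q p r SS x =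
     (\<Sum>t\<in>{1..T}. \<Sum>j\<in>UNIV. q t j * (\<Sum>S\<in>SS. x j S * (\<Sum>i\<in>S. r i j * p j i S)))"

definition mcdlp_optimal ::
  "nat \<Rightarrow> (nat \<Rightarrow> 'b::finite \<Rightarrow> real) \<Rightarrow> ('b \<Rightarrow> 'a::finite \<Rightarrow> 'a set \<Rightarrow> real)
   \<Rightarrow> ('a \<Rightarrow> 'b \<Rightarrow> real) \<Rightarrow> ('b \<Rightarrow> nat) \<Rightarrow> 'a set set \<Rightarrow> ('b \<Rightarrow> 'a set \<Rightarrow> real) \<Rightarrow> bool" where
  "mcdlp_optimal T q p r l SS x \<longleftrightarrow>
     mcdlp_feasible T q p l SS x \<and>
     (\<forall>y. mcdlp_feasible T q p l SS y \<longrightarrow> mcdlp_objective T q p r SS y \<le> mcdlp_objective T q p r SS x)"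

definition choice_pmf :: "('b \<Rightarrow> 'a \<Rightarrow> 'a set \<Rightarrow> real) \<Rightarrow> 'b \<Rightarrow> 'a set \<Rightarrow> 'a option pmf" where
  "choice_pmf p j A = embed_pmf (\<lambda>oc. case oc of
       None \<Rightarrow> 1 - (\<Sum>i\<in>A. p j i A)
     | Some i \<Rightarrow> (if i \<in> A then p j i A else 0))"

text \<open>Goes through the ordering pi; k = number of stages offered so far, shown = items already
  shown to this customer, sold = sold-out items. Returns the list of stages (S, A, c): the
  assortment S of pi that was selected, the actually offered set A (S minus sold-out and
  previously shown items) and the purchase decision c.\<close>
fun offer_seq :: "('b \<Rightarrow> 'a set \<Rightarrow> real) \<Rightarrow> real \<Rightarrow> ('b \<Rightarrow> 'a \<Rightarrow> 'a set \<Rightarrow> real) \<Rightarrow> nat \<Rightarrow> 'b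
   \<Rightarrow> 'a set \<Rightarrow> 'a set list \<Rightarrow> 'a set \<Rightarrow> nat \<Rightarrow> ('a set \<times> 'a set \<times> 'a option) list pmf" where
  "offer_seq x \<alpha> p L j sold [] shown k = return_pmf []"
| "offer_seq x \<alpha> p L j sold (S # rest) shown k =
     (if L \<le> k then return_pmf []
      else bind_pmf (bernoulli_pmf (x j S / \<alpha>)) (\<lambda>b.
        if b then
          (let A = S - sold - shown in
           bind_pmf (choice_pmf p j A) (\<lambda>c.
             case c of
               Some _ \<Rightarrow> return_pmf [(S, A, c)]
             | None \<Rightarrow> map_pmf ((#) (S, A, c)) (offer_seq x \<alpha> p L j sold rest (shown \<union> A) (Suc k))))
        else offer_seq x \<alpha> p L j sold rest shown k))"

text \<open>State: (sold-out items, hist). hist j = Some (pi, stages) records the ordering and the stages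
  of the first customer of type j; None if no customer of type j has arrived yet.\<close>
type_synonym ('a, 'b) ro_state =
  "'a set \<times> ('b \<Rightarrow> ('a set list \<times> ('a set \<times> 'a set \<times> 'a option) list) option)"

definition ro_step :: "('b::finite \<Rightarrow> 'a set \<Rightarrow> real) \<Rightarrow> real \<Rightarrow> ('b \<Rightarrow> 'a \<Rightarrow> 'a set \<Rightarrow> real)
   \<Rightarrow> ('b \<Rightarrow> nat) \<Rightarrow> 'a set set \<Rightarrow> ('a, 'b) ro_state \<Rightarrow> ('a, 'b) ro_state pmf" where
  "ro_step x \<alpha> p l SS st =
     bind_pmf (pmf_of_set (UNIV :: 'b set)) (\<lambda>j.
       case st of (sold, hist) \<Rightarrow>
         if hist j \<noteq> None then return_pmf (sold, hist)
         else bind_pmf (pmf_of_set (permutations_of_set SS)) (\<lambda>\<pi>.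
                map_pmf (\<lambda>stages.
                   (sold \<union> {i. \<exists>S A. (S, A, Some i) \<in> set stages}, hist(j := Some (\<pi>, stages))))
                 (offer_seq x \<alpha> p (l j) j sold \<pi> {} 0)))"

fun ro_run :: "('b::finite \<Rightarrow> 'a set \<Rightarrow> real) \<Rightarrow> real \<Rightarrow> ('b \<Rightarrow> 'a \<Rightarrow> 'a set \<Rightarrow> real)
   \<Rightarrow> ('b \<Rightarrow> nat) \<Rightarrow> 'a set set \<Rightarrow> nat \<Rightarrow> ('a, 'b) ro_state pmf" where
  "ro_run x \<alpha> p l SS 0 = return_pmf ({}, (\<lambda>_. None))"
| "ro_run x \<alpha> p l SS (Suc t) = bind_pmf (ro_run x \<alpha> p l SS t) (ro_step x \<alpha> p l SS)"

definition shown_before :: "'b \<Rightarrow> 'a set \<Rightarrow> 'a \<Rightarrow> ('a, 'b) ro_state \<Rightarrow> bool" where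
  "shown_before j S i st = (case snd st j of
      None \<Rightarrow> False
    | Some (\<pi>, stages) \<Rightarrow>
        (\<exists>S' A c. (S', A, c) \<in> set stages \<and> i \<in> A \<and> S' \<in> set (takeWhile (\<lambda>U. U \<noteq> S) \<pi>)))"

definition type_arrived :: "'b \<Rightarrow> ('a, 'b) ro_state \<Rightarrow> bool" where
  "type_arrived j st = (snd st j \<noteq> None)"

end

theory Submission
  imports Defs
begin

lemma int_bnd:
  fixes f :: "'b \<Rightarrow> real"
  assumes "\<And>x. \<bar>f x\<bar> \<le> B"
  shows "integrable (measure_pmf M) f"
  by (rule measure_pmf.integrable_const_bound[where B=B]) (auto simp: assms)

lemma integral_bind_pmf':
  fixes f :: "'b \<Rightarrow> real"
  assumes "\<And>x. \<bar>f x\<bar> \<le> B"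
  shows "measure_pmf.expectation (bind_pmf M N) f = measure_pmf.expectation M (\<lambda>x. measure_pmf.expectation (N x) f)"
  using measurable_measure_pmf[of N] unfolding measure_pmf_bind
  by (intro integral_bind[where K="count_space UNIV" and B=B and B'=1])
     (auto simp: assms measure_pmf.emeasure_space_1 intro: measure_pmf.finite_measure)

lemma integral_le_pmf:
  fixes f :: "'b \<Rightarrow> real"
  assumes "\<And>x. \<bar>f x\<bar> \<le> B" "\<And>x. x \<in> set_pmf M \<Longrightarrow> f x \<le> C"
  shows "measure_pmf.expectation M f \<le> C"
  by (rule measure_pmf.integral_le_const[OF int_bnd[OF assms(1)]]) (auto simp: AE_measure_pmf_iff assms(2))

lemma integral_eq_pmf:
  fixes f :: "'b \<Rightarrow> real"
  assumes "\<And>x. x \<in> set_pmf M \<Longrightarrow> f x = C"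
  shows "measure_pmf.expectation M f = C"
proof -
  have "measure_pmf.expectation M f = measure_pmf.expectation M (\<lambda>_. C)"
    by (rule integral_cong_AE) (auto simp: AE_measure_pmf_iff assms)
  thus ?thesis by simp
qed

lemma E_ind_abs:
  "\<bar>measure_pmf.expectation M (\<lambda>x. if Q x then 1 else 0 :: real)\<bar> \<le> 1"
proof -
  have "measure_pmf.expectation M (\<lambda>x. if Q x then 1 else 0 :: real) \<le> 1"
    by (rule integral_le_pmf[where B=1]) auto
  moreover have "0 \<le> measure_pmf.expectation M (\<lambda>x. if Q x then 1 else 0 :: real)"
    by (intro integral_nonneg_AE) auto
  ultimately show ?thesis by simp
qed

definition bad :: "'a set set \<Rightarrow> 'a \<Rightarrow> ('a set \<times> 'a set \<times> 'a option) list \<Rightarrow> bool" where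
  "bad P i stages = (\<exists>S' A c. (S', A, c) \<in> set stages \<and> i \<in> A \<and> S' \<in> P)"

lemma bern_sum: "pmf (bernoulli_pmf q) True + pmf (bernoulli_pmf q) False = 1"
proof -
  have "measure_pmf.expectation (bernoulli_pmf q) (\<lambda>_. 1::real) = 1" by simp
  moreover have "measure_pmf.expectation (bernoulli_pmf q) (\<lambda>_. 1::real) = (\<Sum>b\<in>UNIV. pmf (bernoulli_pmf q) b *\<^sub>R 1)"
    by (rule integral_measure_pmf) auto
  ultimately show ?thesis by (simp add: UNIV_bool)
qed

lemma offer_bound:
  assumes "\<forall>S'\<in>set \<pi>. S' \<in> P \<and> i \<in> S' \<longrightarrow> 0 \<le> x j S' / \<alpha> \<and> x j S' / \<alpha> \<le> 1"
  shows "measure_pmf.expectation (offer_seq x \<alpha> p L j sold \<pi> shown k) (\<lambda>st. if bad P i st then 1 else 0)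
     \<le> sum_list (map (\<lambda>S'. if S' \<in> P \<and> i \<in> S' then x j S' / \<alpha> else 0) \<pi>)"
  using assms
proof (induction \<pi> arbitrary: shown k)
  case Nil
  then show ?case by (simp add: bad_def)
next
  case (Cons S rest)
  define R where "R = sum_list (map (\<lambda>S'. if S' \<in> P \<and> i \<in> S' then x j S' / \<alpha> else 0) rest)"
  define \<delta> where "\<delta> = (if S \<in> P \<and> i \<in> S then 1 else 0 :: real)"
  have hyp: "\<forall>S'\<in>set rest. S' \<in> P \<and> i \<in> S' \<longrightarrow> 0 \<le> x j S' / \<alpha> \<and> x j S' / \<alpha> \<le> 1"
    using Cons.prems by auto
  have IH: "\<And>sh k. measure_pmf.expectation (offer_seq x \<alpha> p L j sold rest sh k) (\<lambda>st. if bad P i st then 1 else 0) \<le> R"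
    using Cons.IH[OF hyp] unfolding R_def by blast
  have R0: "0 \<le> R" unfolding R_def
    by (rule sum_list_nonneg) (use hyp in auto)
  have rhs: "sum_list (map (\<lambda>S'. if S' \<in> P \<and> i \<in> S' then x j S' / \<alpha> else 0) (S # rest))
     = (if S \<in> P \<and> i \<in> S then x j S / \<alpha> else 0) + R" by (simp add: R_def)
  show ?case
  proof (cases "L \<le> k")
    case True
    have "0 \<le> sum_list (map (\<lambda>S'. if S' \<in> P \<and> i \<in> S' then x j S' / \<alpha> else 0) (S # rest))"
    proof (rule sum_list_nonneg)
      fix y assume "y \<in> set (map (\<lambda>S'. if S' \<in> P \<and> i \<in> S' then x j S' / \<alpha> else 0) (S # rest))"
      then obtain S' where "S' \<in> set (S # rest)" "y = (if S' \<in> P \<and> i \<in> S' then x j S' / \<alpha> else 0)" unfolding set_map by blast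
      then show "0 \<le> y" using Cons.prems by (cases "S' \<in> P \<and> i \<in> S'") auto
    qed
    then show ?thesis using True by (simp add: bad_def)
  next
    case False
    define B where "B = bernoulli_pmf (x j S / \<alpha>)"
    define A where "A = S - sold - shown"
    define g where "g = (\<lambda>b. if b then
          bind_pmf (choice_pmf p j A) (\<lambda>c.
             case c of
               Some _ \<Rightarrow> return_pmf [(S, A, c)]
             | None \<Rightarrow> map_pmf ((#) (S, A, c)) (offer_seq x \<alpha> p L j sold rest (shown \<union> A) (Suc k)))
        else offer_seq x \<alpha> p L j sold rest shown k)"
    have eq: "offer_seq x \<alpha> p L j sold (S # rest) shown k = bind_pmf B g"
      unfolding B_def g_def A_def using False by (simp add: Let_def cong: if_cong)
    define h where "h = (\<lambda>b. measure_pmf.expectation (g b) (\<lambda>st. if bad P i st then 1 else 0 :: real))"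
    have E1: "measure_pmf.expectation (bind_pmf B g) (\<lambda>st. if bad P i st then 1 else 0 :: real)
        = measure_pmf.expectation B h"
      unfolding h_def by (rule integral_bind_pmf'[where B=1]) auto
    have E2: "measure_pmf.expectation B h = (\<Sum>b\<in>UNIV. pmf B b *\<^sub>R h b)"
      by (rule integral_measure_pmf) auto
    have hF: "h False \<le> R" unfolding h_def g_def using IH by simp
    have hT: "h True \<le> \<delta> + R"
    proof -
      have "h True = measure_pmf.expectation (choice_pmf p j A) (\<lambda>c. measure_pmf.expectation (case c of
               Some _ \<Rightarrow> return_pmf [(S, A, c)]
             | None \<Rightarrow> map_pmf ((#) (S, A, c)) (offer_seq x \<alpha> p L j sold rest (shown \<union> A) (Suc k))) (\<lambda>st. if bad P i st then 1 else 0 :: real))"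
        unfolding h_def g_def by (simp, rule integral_bind_pmf'[where B=1]) auto
      also have "\<dots> \<le> \<delta> + R"
      proof (rule integral_le_pmf[where B=1])
        fix c show "\<bar>measure_pmf.expectation (case c of
               Some _ \<Rightarrow> return_pmf [(S, A, c)]
             | None \<Rightarrow> map_pmf ((#) (S, A, c)) (offer_seq x \<alpha> p L j sold rest (shown \<union> A) (Suc k))) (\<lambda>st. if bad P i st then 1 else 0 :: real)\<bar> \<le> 1"
          by (rule E_ind_abs)
      next
        fix c
        show "measure_pmf.expectation (case c of
               Some _ \<Rightarrow> return_pmf [(S, A, c)]
             | None \<Rightarrow> map_pmf ((#) (S, A, c)) (offer_seq x \<alpha> p L j sold rest (shown \<union> A) (Suc k))) (\<lambda>st. if bad P i st then 1 else 0 :: real) \<le> \<delta> + R"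
        proof (cases "S \<in> P \<and> i \<in> A")
          case True
          then have "\<delta> = 1" using A_def \<delta>_def by auto
          have "\<forall>M. measure_pmf.expectation M (\<lambda>st. if bad P i st then 1 else 0 :: real) \<le> 1"
            using E_ind_abs abs_le_D1 by blast
          then show ?thesis using R0 \<open>\<delta> = 1\<close> by (metis add_increasing2)
        next
          case nf: False
          have d0: "0 \<le> \<delta>" by (simp add: \<delta>_def)
          show ?thesis
          proof (cases c)
            case None
            have "measure_pmf.expectation (map_pmf ((#) (S, A, c)) (offer_seq x \<alpha> p L j sold rest (shown \<union> A) (Suc k))) (\<lambda>st. if bad P i st then 1 else 0 :: real)
              = measure_pmf.expectation (offer_seq x \<alpha> p L j sold rest (shown \<union> A) (Suc k)) (\<lambda>st. if bad P i st then 1 else 0 :: real)"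
              unfolding integral_map_pmf by (rule Bochner_Integration.integral_cong[OF refl]) (use nf in \<open>auto simp: bad_def\<close>)
            then show ?thesis using None IH[of "shown \<union> A" "Suc k"] d0 by simp
          next
            case (Some a)
            have "measure_pmf.expectation (return_pmf [(S, A, c)]) (\<lambda>st. if bad P i st then 1 else 0 :: real) = 0"
              by (rule integral_eq_pmf) (use nf in \<open>auto simp: bad_def\<close>)
            then show ?thesis using Some d0 R0 by simp
          qed
        qed
      qed
      finally show ?thesis .
    qed
    have pT0: "0 \<le> pmf B True" "0 \<le> pmf B False" by auto
    have sum1: "pmf B True + pmf B False = 1" unfolding B_def by (rule bern_sum)
    have main: "measure_pmf.expectation B h \<le> pmf B True * \<delta> + R"
    proof -
      have "measure_pmf.expectation B h = pmf B True * h True + pmf B False * h False"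
        using E2 by (simp add: UNIV_bool)
      also have "\<dots> \<le> pmf B True * (\<delta> + R) + pmf B False * R"
        using hT hF pT0 by (intro add_mono mult_left_mono) auto
      also have "\<dots> = pmf B True * \<delta> + R" using sum1 by algebra
      finally show ?thesis .
    qed
    have "pmf B True * \<delta> \<le> (if S \<in> P \<and> i \<in> S then x j S / \<alpha> else 0)"
    proof (cases "S \<in> P \<and> i \<in> S")
      case True
      then have "0 \<le> x j S / \<alpha>" "x j S / \<alpha> \<le> 1" using Cons.prems by auto
      then show ?thesis using True by (simp add: B_def \<delta>_def)
    qed (auto simp: \<delta>_def)
    then show ?thesis using main E1 eq rhs by simp
  qed
qed

lemma takeWhile_disj:
  assumes "distinct \<pi>" "S \<in> set \<pi>"
  shows "set (takeWhile (\<lambda>U. U \<noteq> S) \<pi>) \<inter> set (takeWhile (\<lambda>U. U \<noteq> S) (rev \<pi>)) = {}"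
proof -
  obtain xs ys where xy: "\<pi> = xs @ S # ys" using split_list[OF assms(2)] by blast
  have d: "S \<notin> set xs" "S \<notin> set ys" "set xs \<inter> set ys = {}" using assms(1) xy by auto
  have "takeWhile (\<lambda>U. U \<noteq> S) \<pi> = xs" using d xy by (auto simp add: takeWhile_tail)
  moreover have "takeWhile (\<lambda>U. U \<noteq> S) (rev \<pi>) = rev ys" using d xy by (auto simp add: takeWhile_tail)
  ultimately show ?thesis using d by simp
qed

lemma perm_avg:
  fixes w :: "'c \<Rightarrow> real"
  assumes fin: "finite SS" and S: "S \<in> SS" and w: "\<And>S'. S' \<in> SS \<Longrightarrow> 0 \<le> w S'"
  shows "measure_pmf.expectation (pmf_of_set (permutations_of_set SS))
           (\<lambda>\<pi>. \<Sum>S'\<in>set (takeWhile (\<lambda>U. U \<noteq> S) \<pi>). w S') \<le> (\<Sum>S'\<in>SS. w S') / 2"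
proof -
  define Ps where "Ps = permutations_of_set SS"
  define f where "f = (\<lambda>\<pi>. \<Sum>S'\<in>set (takeWhile (\<lambda>U. U \<noteq> S) \<pi>). w S')"
  have Pf: "finite Ps" "Ps \<noteq> {}" using fin by (auto simp: Ps_def)
  have E: "measure_pmf.expectation (pmf_of_set Ps) f = sum f Ps / card Ps"
    by (rule integral_pmf_of_set[OF Pf(2) Pf(1)])
  have rev: "sum f Ps = sum (\<lambda>\<pi>. f (rev \<pi>)) Ps"
  proof -
    have "sum f Ps = sum f (rev ` Ps)" by (simp add: Ps_def)
    also have "\<dots> = sum (\<lambda>\<pi>. f (rev \<pi>)) Ps" by (rule sum.reindex_cong[where l=rev]) (auto intro: inj_onI)
    finally show ?thesis .
  qed
  have pt: "f \<pi> + f (rev \<pi>) \<le> (\<Sum>S'\<in>SS. w S')" if "\<pi> \<in> Ps" for \<pi>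
  proof -
    have pd: "distinct \<pi>" "set \<pi> = SS" using that by (auto simp: Ps_def permutations_of_set_def)
    have disj: "set (takeWhile (\<lambda>U. U \<noteq> S) \<pi>) \<inter> set (takeWhile (\<lambda>U. U \<noteq> S) (rev \<pi>)) = {}"
      using takeWhile_disj[of \<pi> S] pd S by simp
    have sub: "set (takeWhile (\<lambda>U. U \<noteq> S) \<pi>) \<union> set (takeWhile (\<lambda>U. U \<noteq> S) (rev \<pi>)) \<subseteq> SS"
      using pd set_takeWhileD by fastforce
    have "f \<pi> + f (rev \<pi>) = (\<Sum>S'\<in>set (takeWhile (\<lambda>U. U \<noteq> S) \<pi>) \<union> set (takeWhile (\<lambda>U. U \<noteq> S) (rev \<pi>)). w S')"
      unfolding f_def by (rule sum.union_disjoint[symmetric]) (use disj in auto)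
    also have "\<dots> \<le> (\<Sum>S'\<in>SS. w S')"
      by (rule sum_mono2[OF fin sub]) (use w in auto)
    finally show ?thesis .
  qed
  have "2 * sum f Ps = sum (\<lambda>\<pi>. f \<pi> + f (rev \<pi>)) Ps" using rev by (simp add: sum.distrib)
  also have "\<dots> \<le> sum (\<lambda>_. (\<Sum>S'\<in>SS. w S')) Ps" by (rule sum_mono) (use pt in auto)
  also have "\<dots> = card Ps * (\<Sum>S'\<in>SS. w S')" by simp
  finally have "sum f Ps / card Ps \<le> (\<Sum>S'\<in>SS. w S') / 2"
    using Pf by (simp add: field_simps card_gt_0_iff)
  then show ?thesis using E unfolding Ps_def f_def by simp
qed

lemma abs_E_bnd:
  fixes f :: "'b \<Rightarrow> real"
  assumes "\<And>x. \<bar>f x\<bar> \<le> B"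
  shows "\<bar>measure_pmf.expectation M f\<bar> \<le> B"
proof -
  have a: "measure_pmf.expectation M f \<le> B" by (rule integral_le_pmf[where B=B]) (use assms abs_le_D1 in auto)
  have "measure_pmf.expectation M (\<lambda>x. - f x) \<le> B" by (rule integral_le_pmf[where B=B]) (use assms abs_le_D2 in auto)
  then have "- measure_pmf.expectation M f \<le> B" by simp
  with a show ?thesis by linarith
qed

lemma E_minus_const:
  fixes f :: "'b \<Rightarrow> real"
  assumes "\<And>x. \<bar>f x\<bar> \<le> B"
  shows "measure_pmf.expectation M (\<lambda>x. f x - c) = measure_pmf.expectation M f - c"
  by (subst Bochner_Integration.integral_diff[OF int_bnd[OF assms] int_bnd[where B="\<bar>c\<bar>"]]) auto

lemma step_keep:
  "y \<in> set_pmf (ro_step x \<alpha> p l SS (sold, hist)) \<Longrightarrow> hist j \<noteq> None \<Longrightarrow> snd y j = hist j"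
  by (auto simp: ro_step_def split: if_splits)

lemma sum_list_conv:
  assumes "distinct \<pi>"
  shows "sum_list (map (\<lambda>S'. if S' \<in> set (takeWhile (\<lambda>U. U \<noteq> S) \<pi>) \<and> i \<in> S' then x j S' / \<alpha> else 0) \<pi>)
       = (\<Sum>S'\<in>set (takeWhile (\<lambda>U. U \<noteq> S) \<pi>). if i \<in> S' then x j S' / \<alpha> else 0)"
proof -
  have "sum_list (map (\<lambda>S'. if S' \<in> set (takeWhile (\<lambda>U. U \<noteq> S) \<pi>) \<and> i \<in> S' then x j S' / \<alpha> else 0) \<pi>)
     = (\<Sum>S'\<in>set \<pi>. if S' \<in> set (takeWhile (\<lambda>U. U \<noteq> S) \<pi>) then (if i \<in> S' then x j S' / \<alpha> else 0) else 0)"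
    using assms by (simp add: sum_list_distinct_conv_sum_set, intro sum.cong) auto
  also have "\<dots> = (\<Sum>S'\<in>set \<pi> \<inter> set (takeWhile (\<lambda>U. U \<noteq> S) \<pi>). if i \<in> S' then x j S' / \<alpha> else 0)"
    by (rule sum.inter_restrict[symmetric]) simp
  also have "set \<pi> \<inter> set (takeWhile (\<lambda>U. U \<noteq> S) \<pi>) = set (takeWhile (\<lambda>U. U \<noteq> S) \<pi>)"
    using set_takeWhileD by fastforce
  finally show ?thesis .
qed

definition FF :: "'b \<Rightarrow> 'a set \<Rightarrow> 'a \<Rightarrow> real \<Rightarrow> ('a, 'b) ro_state \<Rightarrow> real" where
  "FF j S i c st = indicator {st. type_arrived j st \<and> shown_before j S i st} st - c * indicator {st. type_arrived j st} st"

lemma FF_bnd: "\<bar>FF j S i c st\<bar> \<le> 1 + \<bar>c\<bar>"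
  unfolding FF_def by (auto split: split_indicator)

lemma FF_dep: "snd y j = snd z j \<Longrightarrow> FF j S i c y = FF j S i c z"
  unfolding FF_def type_arrived_def shown_before_def indicator_def by simp

lemma step_le:
  fixes x :: "'b::finite \<Rightarrow> 'a::finite set \<Rightarrow> real" and SS :: "'a set set"
  assumes S: "S \<in> SS"
    and hx: "\<forall>S'\<in>SS. i \<in> S' \<longrightarrow> 0 \<le> x j S' / \<alpha> \<and> x j S' / \<alpha> \<le> 1"
    and hW: "(\<Sum>S'\<in>SS. if i \<in> S' then x j S' / \<alpha> else 0) \<le> 2 * c"
  shows "measure_pmf.expectation (ro_step x \<alpha> p l SS st) (FF j S i c) \<le> FF j S i c st"
proof -
  obtain sold hist where st: "st = (sold, hist)" by (cases st)
  have finSS: "finite SS" by simp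
  show ?thesis
  proof (cases "hist j = None")
    case False
    have "measure_pmf.expectation (ro_step x \<alpha> p l SS st) (FF j S i c) = FF j S i c st"
      by (rule integral_eq_pmf, rule FF_dep) (use step_keep[of _ x \<alpha> p l SS sold hist j] False st in auto)
    then show ?thesis by simp
  next
    case True
    have F0: "FF j S i c st = 0" using True st by (simp add: FF_def type_arrived_def)
    define Ps where "Ps = permutations_of_set SS"
    define G where "G = (\<lambda>j'. if hist j' \<noteq> None then return_pmf (sold, hist)
         else bind_pmf (pmf_of_set Ps) (\<lambda>\<pi>.
                map_pmf (\<lambda>stages.
                   (sold \<union> {i. \<exists>S A. (S, A, Some i) \<in> set stages}, hist(j' := Some (\<pi>, stages))))
                 (offer_seq x \<alpha> p (l j') j' sold \<pi> {} 0)))"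
    have eq: "ro_step x \<alpha> p l SS st = bind_pmf (pmf_of_set UNIV) G"
      by (simp add: st ro_step_def G_def Ps_def cong: if_cong)
    have E1: "measure_pmf.expectation (ro_step x \<alpha> p l SS st) (FF j S i c)
        = (\<Sum>j'\<in>UNIV. measure_pmf.expectation (G j') (FF j S i c)) / card (UNIV :: 'b set)"
      unfolding eq
      by (subst integral_bind_pmf'[where B="1 + \<bar>c\<bar>"], rule FF_bnd, rule integral_pmf_of_set) auto
    have other: "measure_pmf.expectation (G j') (FF j S i c) = 0" if "j' \<noteq> j" for j'
    proof (rule integral_eq_pmf)
      fix y assume "y \<in> set_pmf (G j')"
      then have "snd y j = None" using that True by (auto simp: G_def split: if_splits)
      then show "FF j S i c y = 0" by (simp add: FF_def type_arrived_def)
    qed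
    have sumeq: "(\<Sum>j'\<in>UNIV. measure_pmf.expectation (G j') (FF j S i c)) = measure_pmf.expectation (G j) (FF j S i c)"
      by (subst sum.remove[of UNIV j]) (auto simp: other)
    define T where "T = (\<lambda>\<pi>::'a set list. set (takeWhile (\<lambda>U. U \<noteq> S) \<pi>))"
    define w where "w = (\<lambda>S'. if i \<in> S' then x j S' / \<alpha> else 0)"
    have Pf: "finite Ps" "Ps \<noteq> {}" by (auto simp: Ps_def)
    have inner: "measure_pmf.expectation (map_pmf (\<lambda>stages.
                   (sold \<union> {i. \<exists>S A. (S, A, Some i) \<in> set stages}, hist(j := Some (\<pi>, stages))))
                 (offer_seq x \<alpha> p (l j) j sold \<pi> {} 0)) (FF j S i c) \<le> (\<Sum>S'\<in>T \<pi>. w S') - c"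
      if "\<pi> \<in> Ps" for \<pi>
    proof -
      have pd: "distinct \<pi>" "set \<pi> = SS" using that by (auto simp: Ps_def permutations_of_set_def)
      have "measure_pmf.expectation (map_pmf (\<lambda>stages.
                   (sold \<union> {i. \<exists>S A. (S, A, Some i) \<in> set stages}, hist(j := Some (\<pi>, stages))))
                 (offer_seq x \<alpha> p (l j) j sold \<pi> {} 0)) (FF j S i c)
          = measure_pmf.expectation (offer_seq x \<alpha> p (l j) j sold \<pi> {} 0)
              (\<lambda>stages. (if bad (T \<pi>) i stages then 1 else 0) - c)"
        unfolding integral_map_pmf
        by (rule Bochner_Integration.integral_cong[OF refl])
           (auto simp: FF_def type_arrived_def shown_before_def bad_def T_def)
      also have "\<dots> = measure_pmf.expectation (offer_seq x \<alpha> p (l j) j sold \<pi> {} 0)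
              (\<lambda>stages. (if bad (T \<pi>) i stages then 1 else 0)) - c"
        by (rule E_minus_const[where B=1]) auto
      also have "\<dots> \<le> sum_list (map (\<lambda>S'. if S' \<in> T \<pi> \<and> i \<in> S' then x j S' / \<alpha> else 0) \<pi>) - c"
        using offer_bound[of \<pi> "T \<pi>" i x j \<alpha> p "l j" sold "{}" 0] hx pd by auto
      also have "\<dots> = (\<Sum>S'\<in>T \<pi>. w S') - c"
        unfolding T_def w_def using sum_list_conv[OF pd(1)] by simp
      finally show ?thesis .
    qed
    have Gj: "G j = bind_pmf (pmf_of_set Ps) (\<lambda>\<pi>.
                map_pmf (\<lambda>stages.
                   (sold \<union> {i. \<exists>S A. (S, A, Some i) \<in> set stages}, hist(j := Some (\<pi>, stages))))
                 (offer_seq x \<alpha> p (l j) j sold \<pi> {} 0))"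
      using True by (simp add: G_def)
    have "measure_pmf.expectation (G j) (FF j S i c)
       = (\<Sum>\<pi>\<in>Ps. measure_pmf.expectation (map_pmf (\<lambda>stages.
                   (sold \<union> {i. \<exists>S A. (S, A, Some i) \<in> set stages}, hist(j := Some (\<pi>, stages))))
                 (offer_seq x \<alpha> p (l j) j sold \<pi> {} 0)) (FF j S i c)) / card Ps"
      unfolding Gj
      by (subst integral_bind_pmf'[where B="1 + \<bar>c\<bar>"], rule FF_bnd,
          rule integral_pmf_of_set[OF Pf(2) Pf(1)])
    also have "\<dots> \<le> (\<Sum>\<pi>\<in>Ps. (\<Sum>S'\<in>T \<pi>. w S') - c) / card Ps"
      by (intro divide_right_mono sum_mono inner) auto
    also have "\<dots> = (\<Sum>\<pi>\<in>Ps. (\<Sum>S'\<in>T \<pi>. w S')) / card Ps - c"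
      using Pf by (simp add: sum_subtractf field_simps card_gt_0_iff)
    also have "(\<Sum>\<pi>\<in>Ps. (\<Sum>S'\<in>T \<pi>. w S')) / card Ps = measure_pmf.expectation (pmf_of_set Ps) (\<lambda>\<pi>. \<Sum>S'\<in>T \<pi>. w S')"
      by (rule integral_pmf_of_set[OF Pf(2) Pf(1), symmetric])
    also have "\<dots> \<le> (\<Sum>S'\<in>SS. w S') / 2"
      unfolding Ps_def T_def by (rule perm_avg[OF finSS S]) (use hx in \<open>auto simp: w_def\<close>)
    finally have "measure_pmf.expectation (G j) (FF j S i c) \<le> 0"
      using hW unfolding w_def by linarith
    then show ?thesis using E1 sumeq F0 by (simp add: divide_nonpos_pos)
  qed
qed

lemma run_le:
  fixes x :: "'b::finite \<Rightarrow> 'a::finite set \<Rightarrow> real" and SS :: "'a set set"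
  assumes S: "S \<in> SS"
    and hx: "\<forall>S'\<in>SS. i \<in> S' \<longrightarrow> 0 \<le> x j S' / \<alpha> \<and> x j S' / \<alpha> \<le> 1"
    and hW: "(\<Sum>S'\<in>SS. if i \<in> S' then x j S' / \<alpha> else 0) \<le> 2 * c"
  shows "measure_pmf.expectation (ro_run x \<alpha> p l SS t) (FF j S i c) \<le> 0"
proof (induction t)
  case 0
  have "measure_pmf.expectation (ro_run x \<alpha> p l SS 0) (FF j S i c) = 0"
    by (rule integral_eq_pmf) (simp add: FF_def type_arrived_def)
  then show ?case by simp
next
  case (Suc t)
  have "measure_pmf.expectation (ro_run x \<alpha> p l SS (Suc t)) (FF j S i c)
      = measure_pmf.expectation (ro_run x \<alpha> p l SS t) (\<lambda>st. measure_pmf.expectation (ro_step x \<alpha> p l SS st) (FF j S i c))"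
    by (simp only: ro_run.simps, rule integral_bind_pmf'[where B="1 + \<bar>c\<bar>"], rule FF_bnd)
  also have "\<dots> \<le> measure_pmf.expectation (ro_run x \<alpha> p l SS t) (FF j S i c)"
    by (rule integral_mono[OF int_bnd[where B="1 + \<bar>c\<bar>"] int_bnd[where B="1 + \<bar>c\<bar>"]])
       (auto intro: abs_E_bnd FF_bnd step_le[where x=x and SS=SS and i=i and j=j and \<alpha>=\<alpha> and c=c and S=S, OF S hx hW])
  finally show ?case using Suc by linarith
qed

theorem lemma4p5:
  fixes SS :: "'a::finite set set"
    and p :: "'b::finite \<Rightarrow> 'a \<Rightarrow> 'a set \<Rightarrow> real"
    and r :: "'a \<Rightarrow> 'b \<Rightarrow> real"
    and l :: "'b \<Rightarrow> nat"
    and x :: "'b \<Rightarrow> 'a set \<Rightarrow> real"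
    and \<alpha> :: real
  assumes down_closed: "\<And>S S'. S \<in> SS \<Longrightarrow> S' \<subseteq> S \<Longrightarrow> S' \<in> SS"
    and p_nonneg: "\<And>j S i. S \<in> SS \<Longrightarrow> i \<in> S \<Longrightarrow> p j i S \<ge> 0"
    and p_sum: "\<And>j S. S \<in> SS \<Longrightarrow> (\<Sum>i\<in>S. p j i S) \<le> 1"
    and subst: "\<And>j S i i'. S \<in> SS \<Longrightarrow> insert i' S \<in> SS \<Longrightarrow> i \<in> S \<Longrightarrow> i' \<noteq> i \<Longrightarrow>
                  p j i S \<ge> p j i (insert i' S)"
    and patience: "\<And>j. l j > 0"
    and r_nonneg: "\<And>i j. r i j \<ge> 0"
    and opt: "mcdlp_optimal CARD('b) (\<lambda>t j. 1 / real CARD('b)) p r l SS x"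
    and alpha: "\<alpha> \<ge> 1"
    and S: "S \<in> SS" and i: "i \<in> S"
  shows "measure_pmf.prob (ro_run x \<alpha> p l SS CARD('b))
             {st. type_arrived j st \<and> shown_before j S i st}
         / measure_pmf.prob (ro_run x \<alpha> p l SS CARD('b)) {st. type_arrived j st}
         \<le> 1 / (2 * \<alpha>)"
proof -
  define c where "c = 1 / (2 * \<alpha>)"
  have apos: "\<alpha> > 0" using alpha by simp
  have nonneg: "\<And>S'. S' \<in> SS \<Longrightarrow> 0 \<le> x j S'" and sumi: "(\<Sum>S'\<in>{S'\<in>SS. i \<in> S'}. x j S') \<le> 1"
    using opt unfolding mcdlp_optimal_def mcdlp_feasible_def by auto
  have finSS: "finite SS" by simp
  have hx: "\<forall>S'\<in>SS. i \<in> S' \<longrightarrow> 0 \<le> x j S' / \<alpha> \<and> x j S' / \<alpha> \<le> 1"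
  proof (intro ballI impI conjI)
    fix S' assume S': "S' \<in> SS" "i \<in> S'"
    show "0 \<le> x j S' / \<alpha>" using nonneg[OF S'(1)] apos by simp
    have "x j S' \<le> (\<Sum>S'\<in>{S'\<in>SS. i \<in> S'}. x j S')"
      by (rule member_le_sum) (use S' nonneg finSS in auto)
    then have "x j S' \<le> \<alpha>" using sumi alpha by linarith
    then show "x j S' / \<alpha> \<le> 1" using apos by simp
  qed
  have hW: "(\<Sum>S'\<in>SS. if i \<in> S' then x j S' / \<alpha> else 0) \<le> 2 * c"
  proof -
    have "(\<Sum>S'\<in>SS. if i \<in> S' then x j S' / \<alpha> else 0) = (\<Sum>S'\<in>{S'\<in>SS. i \<in> S'}. x j S') / \<alpha>"
    proof -
      have "(\<Sum>S'\<in>SS. if i \<in> S' then x j S' / \<alpha> else 0) = (\<Sum>S'\<in>SS. (if i \<in> S' then x j S' else 0) / \<alpha>)"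
        by (rule sum.cong) auto
      also have "\<dots> = (\<Sum>S'\<in>SS. (if i \<in> S' then x j S' else 0)) / \<alpha>"
        by (simp add: sum_divide_distrib)
      finally show ?thesis using finSS by (simp add: sum.inter_filter)
    qed
    also have "\<dots> \<le> 1 / \<alpha>" using sumi apos by (simp add: divide_right_mono)
    finally show ?thesis unfolding c_def using apos by simp
  qed
  define M where "M = ro_run x \<alpha> p l SS CARD('b)"
  define E1 where "E1 = {st. type_arrived j st \<and> shown_before j S i st}"
  define E2 where "E2 = {st::('a,'b) ro_state. type_arrived j st}"
  have le0: "measure_pmf.expectation M (FF j S i c) \<le> 0"
    unfolding M_def by (rule run_le[where x=x and SS=SS and i=i and j=j and \<alpha>=\<alpha> and c=c and S=S, OF S hx hW])
  have i1: "integrable (measure_pmf M) (indicator E1 :: _ \<Rightarrow> real)"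
    by (rule int_bnd[where B=1]) (auto split: split_indicator)
  have i2: "integrable (measure_pmf M) (\<lambda>st. c * indicator E2 st)"
    by (rule int_bnd[where B="\<bar>c\<bar>"]) (auto split: split_indicator)
  have "measure_pmf.expectation M (FF j S i c)
      = measure_pmf.expectation M (indicator E1) - measure_pmf.expectation M (\<lambda>st. c * indicator E2 st)"
    unfolding FF_def E1_def[symmetric] E2_def[symmetric] by (rule Bochner_Integration.integral_diff[OF i1 i2])
  also have "\<dots> = measure_pmf.prob M E1 - c * measure_pmf.prob M E2"
    by (simp add: measure_pmf.emeasure_eq_measure)
  finally have key: "measure_pmf.prob M E1 \<le> c * measure_pmf.prob M E2" using le0 by linarith
  show ?thesis
  proof (cases "measure_pmf.prob M E2 = 0")
    case True
    then show ?thesis using apos unfolding M_def[symmetric] E1_def[symmetric] E2_def[symmetric] by simp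
  next
    case False
    then have "measure_pmf.prob M E2 > 0" using measure_nonneg[of M E2] by linarith
    then have "measure_pmf.prob M E1 / measure_pmf.prob M E2 \<le> c" using key by (simp add: pos_divide_le_eq)
    then show ?thesis unfolding M_def E1_def E2_def c_def .
  qed
qed

end
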